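(* Let $(\Gamma,x)\subset\Sigma$, $\lambda$, $\omega$, $D^{1/2}$, $S$, $\mathcal L$ be as in the context, and let $s\mathcal O\subset\mathbb C^\diamondsuit$ be the real subspace of functions $F$ such that $\exp(i\pi/4)F$ is s-holomorphic around every vertex of $\Gamma$. (i) $S$ restricts to an $\mathbb R$-linear isomorphism $s\mathcal O\cong\mathcal L\cap\ker(\mathit{KW}(\Gamma,x))$. (ii) The map $\widetilde T\colon\mathbb C^\diamondsuit\to\mathbb R^B$, $(\widetilde TF)(b)=\mathrm{Re}\big(i\,D_e^{1/2}\exp(-\tfrac i2\theta_e)F(z_e)\big)$ for $b=\psi_B(e)$, restricts to an isomorphism $s\mathcal O\cong\ker(\mathrm K^\omega(C_\Gamma,y))$. (iii) If $\Gamma$ is isoradially embedded in a flat surface $\Sigma$ with critical weights, the map $\widetilde{T'}\colon\mathbb C^\diamondsuit\to\mathbb C^B$, $(\widetilde{T'}F)(b)=i\,D_e^{1/2}\Pr\big(F(z_e);\,i\exp(-\tfrac i2(a_e-\theta_e))\big)$ for $b=\psi_B(e)$, restricts to an isomorphism $s\mathcal O\cong\ker(\bar\partial^{\varphi_\omega}_C)\cap\widetilde{T'}(\mathbb C^\diamondsuit)$.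
   Context: Let $\Sigma$ be a closed connected oriented surface with a Riemannian metric, $\Gamma\subset\Sigma$ a finite connected graph with smoothly embedded edges whose faces are discs, weights $x_e=\tan(\theta_e/2)$, $\theta_e\in[0,\pi/2]$. $\mathbb E$: oriented edges (origin $o$, terminus $t$, reversal $\bar e$), $z_e=z_{\bar e}$ midpoint, $\diamondsuit=\{z_e\}$, $\theta_{\bar e}=\theta_e$, $\mathbb E_v$ edges with origin $v$. Fix a vector field $\lambda$ with isolated zeros of even index in $\Sigma\setminus\Gamma$; $\alpha_\lambda(e,e')$ ($o(e')=t(e)$, $e'\ne\bar e$) is the rotation angle relative to $\lambda$ of the velocity along $e$ from $z_e$ to $t(e)$ then $e'$ to $z_{e'}$. $(\mathit{KW}(\Gamma,x)f)(e)=f(e)-x_e\sum_{e'\in\mathbb E_{t(e)},e'\ne\bar e}e^{\frac i2\alpha_\lambda(e,e')}f(e')$. $a_e$: oriented angle at $z_e$ from $\lambda$ to $e$, $D_e=e^{ia_e}$; $R(e)$: next element of $\mathbb E_{o(e)}$ counterclockwise; $\beta_e=\pi+\alpha_\lambda(\bar e,R(e))$, $q_e=e^{i\beta_e/2}$. $\Pr(\cdot;u)$: orthogonal projection of $\mathbb C$ onto $u\mathbb R$. $G\in\mathbb C^\diamondsuit$ is s-holomorphic around $v$ if for all $e\in\mathbb E_v$, $e'=R(e)$: $\Pr\big(G(z_e);[ie^{i(a_e+\theta_e)}]^{-1/2}\big)=\Pr\big(G(z_{e'});[ie^{i(a_{e'}-\theta_{e'})}]^{-1/2}\big)\exp(\tfrac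 i2(\beta_e-\theta_e-\theta_{e'}))$. $C_\Gamma$: each edge replaced by a rectangle; for each orientation $e$, vertex near $o(e)$ right of $e$ is black $\psi_B(e)$, near $o(e)$ left of $e$ is white $\psi_W(e)$; edges $\{\psi_W(e),\psi_B(e)\}$ weight $\cos\theta_e$, $\{\psi_W(e),\psi_B(\bar e)\}$ weight $\sin\theta_e$, corner edges $\{\psi_W(e),\psi_B(R(e))\}$ weight $1$; $B,W$ black/white sets. A Kasteleyn orientation $\omega\colon E(C_\Gamma)\to\{\pm1\}$ has $\prod_{\partial f}\omega=(-1)^{|\partial f|/2+1}$ on each face; $(\mathrm K^\omega g)(w)=\sum_{b\sim w}\omega(w,b)y_{wb}g(b)$, $\mathbb R^B\to\mathbb R^W$. Fix $\omega$ and square roots $D_e^{1/2}$ such that $\mathit{KW}(\Gamma,x)\circ(I-qR)\circ D^{-1/2}\circ\psi_B=(I-ixJ)\circ D^{-1/2}\circ\psi_W\circ\mathrm K^\omega$ (such a pair exists), with $(Jf)(e)=f(\bar e)$, $(Rf)(e)=f(R(e))$, $q,x,D^{-1/2}=(D^{1/2})^{-1}$ diagonal, $(\psi_Bg)(e)=g(\psi_B(e))$, $(\psi_Wh)(e)=h(\psi_W(e))$. $\mathcal L=\{f\in\mathbb C^{\mathbb E}: f(e)\in e^{-\frac i2a_e}\mathbb R\}$, $(SF)(e)=\sin(\theta_e/2)\Pr(F(z_e);e^{-\frac i2a_e})$. Isoradial case: $\Sigma$ flat with conical singularities, obtained by gluing rhombi of common side $\delta$ whose distinguished diagonals form $\Gamma$,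 all cone angles odd multiples of $2\pi$, $\theta_e$ the half-rhombus angle of $e$, $x_e=\tan(\theta_e/2)$. For $w=\psi_W(e)$, $b_1=\psi_B(e)$, $b_2=\psi_B(\bar e)$, $b_3=\psi_B(R(e))$: $(\bar\partial^\varphi_Cg)(w)=\sin(2\theta_e)^{-1}\big(\varphi(w,b_1)\cos\theta_eg(b_1)+i\varphi(w,b_2)\sin\theta_eg(b_2)-e^{i\theta_e}\varphi(w,b_3)g(b_3)\big)$, and $\varphi_\omega(w,b_1)=\omega(w,b_1)$, $\varphi_\omega(w,b_2)=-i\omega(w,b_2)$, $\varphi_\omega(w,b_3)=-\exp(-\tfrac i2(\theta_e+\theta_{R(e)}))\omega(w,b_3)$. *)

theory Defs
  imports Complex_Main
begin

text \<open>Oriented edges (darts) form a finite type 'd.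
  J = reversal e \<mapsto> bar e, R = next dart counterclockwise around the origin vertex.
  Vertices of Gamma = R-orbits, edges = J-orbits, faces = orbits of inv R o J.
  Geometry (relative to the vector field lambda):
   phi e = angle (relative to lambda) of the tangent direction of e at o(e);
   r e   = rotation of the velocity relative to lambda along e from o(e) to z_e.\<close>

definition orb :: "('d \<Rightarrow> 'd) \<Rightarrow> 'd \<Rightarrow> 'd set" where
  "orb f e = {(f ^^ n) e | n. True}"

definition face_next :: "('d \<Rightarrow> 'd) \<Rightarrow> ('d \<Rightarrow> 'd) \<Rightarrow> 'd \<Rightarrow> 'd" where
  "face_next J R e = inv R (J e)"

definition combinatorial_map :: "('d \<Rightarrow> 'd) \<Rightarrow> ('d \<Rightarrow> 'd) \<Rightarrow> bool" where
  "combinatorial_map J R \<longleftrightarrow>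
     (\<forall>e. J (J e) = e \<and> J e \<noteq> e) \<and> bij R \<and>
     (\<forall>d d'. (d, d') \<in> ({(e, J e) | e. True} \<union> {(e, R e) | e. True})\<^sup>*)"

definition ccw_angle :: "('d \<Rightarrow> real) \<Rightarrow> ('d \<Rightarrow> 'd) \<Rightarrow> 'd \<Rightarrow> real" where
  "ccw_angle \<phi> R e =
     (let m = 2 * pi * frac ((\<phi> (R e) - \<phi> e) / (2 * pi)) in if m = 0 then 2 * pi else m)"

text \<open>principal value in (-pi, pi] (turning angle at a corner)\<close>
definition princ :: "real \<Rightarrow> real" where
  "princ x = x - 2 * pi * of_int \<lceil>(x - pi) / (2 * pi)\<rceil>"

text \<open>a_e: oriented angle at z_e from lambda to e\<close>
definition aang :: "('d \<Rightarrow> real) \<Rightarrow> ('d \<Rightarrow> real) \<Rightarrow> 'd \<Rightarrow> real" where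
  "aang \<phi> r e = \<phi> e + r e"

text \<open>alpha_lambda(e,e'), for o(e') = t(e), e' \<noteq> bar e\<close>
definition alpha :: "('d \<Rightarrow> 'd) \<Rightarrow> ('d \<Rightarrow> real) \<Rightarrow> ('d \<Rightarrow> real) \<Rightarrow> 'd \<Rightarrow> 'd \<Rightarrow> real" where
  "alpha J \<phi> r e e' = - r (J e) + princ (\<phi> e' - \<phi> (J e) - pi) + r e'"

definition beta :: "('d \<Rightarrow> 'd) \<Rightarrow> ('d \<Rightarrow> 'd) \<Rightarrow> ('d \<Rightarrow> real) \<Rightarrow> ('d \<Rightarrow> real) \<Rightarrow> 'd \<Rightarrow> real" where
  "beta J R \<phi> r e = pi + alpha J \<phi> r (J e) (R e)"

definition qq :: "('d \<Rightarrow> 'd) \<Rightarrow> ('d \<Rightarrow> 'd) \<Rightarrow> ('d \<Rightarrow> real) \<Rightarrow> ('d \<Rightarrow> real) \<Rightarrow> 'd \<Rightarrow> complex" where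
  "qq J R \<phi> r e = cis (beta J R \<phi> r e / 2)"

definition xw :: "('d \<Rightarrow> real) \<Rightarrow> 'd \<Rightarrow> real" where
  "xw \<theta> e = tan (\<theta> e / 2)"

text \<open>The data come from a smooth graph embedding on a closed oriented surface with a vector
  field lambda whose zeros (in the complement of Gamma) have even index.\<close>
definition geometric_data ::
  "('d \<Rightarrow> 'd) \<Rightarrow> ('d \<Rightarrow> 'd) \<Rightarrow> ('d \<Rightarrow> real) \<Rightarrow> ('d \<Rightarrow> real) \<Rightarrow> ('d \<Rightarrow> real) \<Rightarrow> bool" where
  "geometric_data J R \<phi> r \<theta> \<longleftrightarrow>
     (\<forall>e. \<theta> (J e) = \<theta> e \<and> 0 \<le> \<theta> e \<and> \<theta> e \<le> pi / 2) \<and>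
     (\<forall>e. (\<Sum>d\<in>orb R e. ccw_angle \<phi> R d) = 2 * pi) \<and>
     (\<forall>e. \<exists>k::int. aang \<phi> r (J e) = aang \<phi> r e + pi + 2 * pi * k) \<and>
     (\<forall>e. \<exists>k::int.
        (\<Sum>d\<in>orb (face_next J R) e.
            - r (J d) + (pi - ccw_angle \<phi> R (face_next J R d)) + r (face_next J R d))
        = 2 * pi + 4 * pi * k)"

definition Pr :: "complex \<Rightarrow> complex \<Rightarrow> complex" where
  "Pr z u = of_real (Re (z * cnj u) / (cmod u)\<^sup>2) * u"

definition KW :: "('d::finite \<Rightarrow> 'd) \<Rightarrow> ('d \<Rightarrow> 'd) \<Rightarrow> ('d \<Rightarrow> real) \<Rightarrow> ('d \<Rightarrow> real)
                   \<Rightarrow> ('d \<Rightarrow> real) \<Rightarrow> ('d \<Rightarrow> complex) \<Rightarrow> 'd \<Rightarrow> complex" where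
  "KW J R \<phi> r \<theta> f e = f e - of_real (xw \<theta> e) *
     (\<Sum>e'\<in>{d \<in> orb R (J e). d \<noteq> J e}. cis (alpha J \<phi> r e e' / 2) * f e')"

text \<open>Kasteleyn operator of C_Gamma; black and white vertices psi_B(e), psi_W(e) are
  indexed by darts e.  om1 e = omega(psi_W e, psi_B e), om2 e = omega(psi_W e, psi_B (J e)),
  om3 e = omega(psi_W e, psi_B (R e)).\<close>
definition Kast :: "('d \<Rightarrow> 'd) \<Rightarrow> ('d \<Rightarrow> 'd) \<Rightarrow> ('d \<Rightarrow> real) \<Rightarrow> ('d \<Rightarrow> real) \<Rightarrow> ('d \<Rightarrow> real)
                     \<Rightarrow> ('d \<Rightarrow> real) \<Rightarrow> ('d \<Rightarrow> real) \<Rightarrow> 'd \<Rightarrow> real" where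
  "Kast J R \<theta> om1 om2 om3 g e =
     om1 e * cos (\<theta> e) * g e + om2 e * sin (\<theta> e) * g (J e) + om3 e * g (R e)"

definition kasteleyn :: "('d::finite \<Rightarrow> 'd) \<Rightarrow> ('d \<Rightarrow> 'd) \<Rightarrow> ('d \<Rightarrow> real) \<Rightarrow> ('d \<Rightarrow> real)
                          \<Rightarrow> ('d \<Rightarrow> real) \<Rightarrow> bool" where
  "kasteleyn J R om1 om2 om3 \<longleftrightarrow>
     (\<forall>e. om1 e \<in> {-1, 1} \<and> om2 e \<in> {-1, 1} \<and> om3 e \<in> {-1, 1}) \<and>
     (\<forall>e. om1 e * om2 e * om1 (J e) * om2 (J e) = -1) \<and>
     (\<forall>e. (\<Prod>d\<in>orb R e. om1 d * om3 d) = (-1) ^ (card (orb R e) + 1)) \<and>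
     (\<forall>e. (\<Prod>d\<in>orb (J \<circ> R) e. om3 d * om2 (J (R d))) = (-1) ^ (card (orb (J \<circ> R) e) + 1))"

definition CD :: "('d \<Rightarrow> 'd) \<Rightarrow> ('d \<Rightarrow> complex) set" where
  "CD J = {F. \<forall>e. F (J e) = F e}"

definition shol_at :: "('d \<Rightarrow> 'd) \<Rightarrow> ('d \<Rightarrow> 'd) \<Rightarrow> ('d \<Rightarrow> real) \<Rightarrow> ('d \<Rightarrow> real) \<Rightarrow> ('d \<Rightarrow> real)
                       \<Rightarrow> ('d \<Rightarrow> complex) \<Rightarrow> 'd \<Rightarrow> bool" where
  "shol_at J R \<phi> r \<theta> G e \<longleftrightarrow>
     Pr (G e) (cis (- (pi / 2 + aang \<phi> r e + \<theta> e) / 2)) =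
     Pr (G (R e)) (cis (- (pi / 2 + aang \<phi> r (R e) - \<theta> (R e)) / 2)) *
       cis ((beta J R \<phi> r e - \<theta> e - \<theta> (R e)) / 2)"

definition sO :: "('d \<Rightarrow> 'd) \<Rightarrow> ('d \<Rightarrow> 'd) \<Rightarrow> ('d \<Rightarrow> real) \<Rightarrow> ('d \<Rightarrow> real) \<Rightarrow> ('d \<Rightarrow> real)
                  \<Rightarrow> ('d \<Rightarrow> complex) set" where
  "sO J R \<phi> r \<theta> = {F \<in> CD J. \<forall>e. shol_at J R \<phi> r \<theta> (\<lambda>d. cis (pi / 4) * F d) e}"

definition SS :: "('d \<Rightarrow> real) \<Rightarrow> ('d \<Rightarrow> real) \<Rightarrow> ('d \<Rightarrow> real) \<Rightarrow> ('d \<Rightarrow> complex) \<Rightarrow> 'd \<Rightarrow> complex" where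
  "SS \<phi> r \<theta> F e = of_real (sin (\<theta> e / 2)) * Pr (F e) (cis (- aang \<phi> r e / 2))"

definition LL :: "('d \<Rightarrow> real) \<Rightarrow> ('d \<Rightarrow> real) \<Rightarrow> ('d \<Rightarrow> complex) set" where
  "LL \<phi> r = {f. \<forall>e. \<exists>t::real. f e = cis (- aang \<phi> r e / 2) * of_real t}"

definition Tt :: "('d \<Rightarrow> complex) \<Rightarrow> ('d \<Rightarrow> real) \<Rightarrow> ('d \<Rightarrow> complex) \<Rightarrow> 'd \<Rightarrow> real" where
  "Tt Dh \<theta> F e = Re (\<i> * Dh e * cis (- \<theta> e / 2) * F e)"

definition Tp :: "('d \<Rightarrow> complex) \<Rightarrow> ('d \<Rightarrow> real) \<Rightarrow> ('d \<Rightarrow> real) \<Rightarrow> ('d \<Rightarrow> real)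
                  \<Rightarrow> ('d \<Rightarrow> complex) \<Rightarrow> 'd \<Rightarrow> complex" where
  "Tp Dh \<phi> r \<theta> F e = \<i> * Dh e * Pr (F e) (\<i> * cis (- (aang \<phi> r e - \<theta> e) / 2))"

definition dbar :: "('d \<Rightarrow> 'd) \<Rightarrow> ('d \<Rightarrow> 'd) \<Rightarrow> ('d \<Rightarrow> real) \<Rightarrow> ('d \<Rightarrow> real) \<Rightarrow> ('d \<Rightarrow> real)
                    \<Rightarrow> ('d \<Rightarrow> real) \<Rightarrow> ('d \<Rightarrow> complex) \<Rightarrow> 'd \<Rightarrow> complex" where
  "dbar J R \<theta> om1 om2 om3 g e =
     inverse (of_real (sin (2 * \<theta> e))) *
       (of_real (om1 e) * of_real (cos (\<theta> e)) * g e
        + \<i> * (- \<i> * of_real (om2 e)) * of_real (sin (\<theta> e)) * g (J e)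
        - cis (\<theta> e) * (- cis (- (\<theta> e + \<theta> (R e)) / 2) * of_real (om3 e)) * g (R e))"

text \<open>Isoradial case: rhombi with half-angle theta_e at the primal vertices (angle between
  e and R e is theta_e + theta_(R e)); cone angles at primal and dual vertices are odd
  multiples of 2 pi; angles relative to lambda at a cone vertex v are flat angles rescaled
  by 2 pi / (cone angle) (conformal smooth structure at the cone point).\<close>
definition isoradial :: "('d \<Rightarrow> 'd) \<Rightarrow> ('d \<Rightarrow> 'd) \<Rightarrow> ('d \<Rightarrow> real) \<Rightarrow> ('d \<Rightarrow> real) \<Rightarrow> bool" where
  "isoradial J R \<phi> \<theta> \<longleftrightarrow>
     (\<forall>e. 0 < \<theta> e \<and> \<theta> e < pi / 2) \<and>
     (\<forall>e. \<exists>k::int. (\<Sum>d\<in>orb R e. 2 * \<theta> d) = 2 * pi * (2 * k + 1)) \<and>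
     (\<forall>e. \<exists>k::int. (\<Sum>d\<in>orb (face_next J R) e. pi - 2 * \<theta> d) = 2 * pi * (2 * k + 1)) \<and>
     (\<forall>e. ccw_angle \<phi> R e = (\<theta> e + \<theta> (R e)) * 2 * pi / (\<Sum>d\<in>orb R e. 2 * \<theta> d))"

end

theory Submission
  imports Defs "HOL-Analysis.Analysis"
begin


lemma princ_shift:
  assumes "-pi < y" "y \<le> pi"
  shows "princ (y + 2*pi* of_int m) = y"
proof -
  have "\<lceil>(y + 2*pi* of_int m - pi) / (2*pi)\<rceil> = m"
  proof (rule ceiling_unique)
    have e: "(y + 2*pi* of_int m - pi) / (2*pi) = of_int m + (y - pi)/(2*pi)"
      by (simp add: field_simps)
    have "(y - pi)/(2*pi) \<le> 0" using assms by (simp add: divide_nonpos_pos)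
    moreover have "-1 < (y - pi)/(2*pi)" using assms pi_gt_zero by (simp add: field_simps)
    ultimately show "of_int m - 1 < (y + 2*pi* of_int m - pi) / (2*pi)"
      "(y + 2*pi* of_int m - pi) / (2*pi) \<le> of_int m" unfolding e by linarith+
  qed
  then show ?thesis unfolding princ_def by simp
qed

lemma ccw_props:
  shows "0 < ccw_angle \<phi> R z" "ccw_angle \<phi> R z \<le> 2*pi"
    "\<exists>m::int. ccw_angle \<phi> R z = \<phi> (R z) - \<phi> z + 2*pi* of_int m"
proof -
  define t where "t = (\<phi> (R z) - \<phi> z) / (2*pi)"
  define m where "m = 2 * pi * frac t"
  have c: "ccw_angle \<phi> R z = (if m = 0 then 2*pi else m)"
    unfolding ccw_angle_def m_def t_def Let_def by simp
  have m0: "0 \<le> m" "m < 2*pi" unfolding m_def using frac_lt_1[of t] frac_ge_0[of t] by auto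
  have me: "m = \<phi> (R z) - \<phi> z - 2*pi* of_int \<lfloor>t\<rfloor>"
    unfolding m_def frac_def t_def by (simp add: field_simps)
  show "0 < ccw_angle \<phi> R z" "ccw_angle \<phi> R z \<le> 2*pi" using c m0 by auto
  show "\<exists>m::int. ccw_angle \<phi> R z = \<phi> (R z) - \<phi> z + 2*pi* of_int m"
  proof (cases "m = 0")
    case True
    then show ?thesis using c me by (intro exI[of _ "1 - \<lfloor>t\<rfloor>"]) (simp add: algebra_simps)
  next
    case False
    then show ?thesis using c me by (intro exI[of _ "- \<lfloor>t\<rfloor>"]) (simp add: algebra_simps)
  qed
qed

lemma princ_ccw: "princ (\<phi> (R z) - \<phi> z - pi) = ccw_angle \<phi> R z - pi"
proof -
  obtain m :: int where m: "ccw_angle \<phi> R z = \<phi> (R z) - \<phi> z + 2*pi* of_int m"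
    using ccw_props(3)[of \<phi> R z] by blast
  have eq: "\<phi> (R z) - \<phi> z - pi = (ccw_angle \<phi> R z - pi) + 2*pi* of_int (-m)"
    using m by simp
  have "-pi < ccw_angle \<phi> R z - pi" "ccw_angle \<phi> R z - pi \<le> pi"
    using ccw_props(1,2)[of \<phi> R z] by auto
  then show ?thesis unfolding eq by (rule princ_shift)
qed

lemma beta_eq:
  assumes "J (J z) = z"
  shows "beta J R \<phi> r z = ccw_angle \<phi> R z + r (R z) - r z"
  unfolding beta_def alpha_def using assms princ_ccw[of \<phi> R z] by simp



lemma orbit_enum:
  fixes R :: "'d::finite \<Rightarrow> 'd"
  assumes "inj R"
  obtains n where "0 < n" "(R ^^ n) b = b" "inj_on (\<lambda>k. (R ^^ k) b) {..<n}"
    "orb R b = (\<lambda>k. (R ^^ k) b) ` {..<n}"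
proof -
  have "finite {y. \<exists>n. y = (R ^^ n) b}" by simp
  then obtain n0 where n0: "n0 > 0" "(R^^n0) b = b" using funpow_inj_finite[OF assms] by blast
  define n where "n = (LEAST m. 0 < m \<and> (R ^^ m) b = b)"
  have n: "0 < n \<and> (R ^^ n) b = b" unfolding n_def by (rule LeastI[of _ n0]) (use n0 in auto)
  have least: "(R^^m) b \<noteq> b" if "0 < m" "m < n" for m
    using not_less_Least[of m "\<lambda>m. 0 < m \<and> (R ^^ m) b = b"] that unfolding n_def by auto
  have inj: "inj_on (\<lambda>k. (R ^^ k) b) {..<n}"
  proof (rule inj_onI)
    fix i j assume ij: "i \<in> {..<n}" "j \<in> {..<n}" "(R ^^ i) b = (R ^^ j) b"
    have *: False if "i < j" "i < n" "j < n" "(R ^^ i) b = (R ^^ j) b" for i j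
    proof -
      have "(R^^i) ((R^^(j-i)) b) = (R^^j) b"
        using that by (metis funpow_add comp_apply le_add_diff_inverse less_imp_le)
      then have "(R^^i) ((R^^(j-i)) b) = (R^^i) b" using that by simp
      then have "(R^^(j-i)) b = b" using inj_fn[OF assms, of i] by (meson injD)
      then show False using least[of "j-i"] that by auto
    qed
    show "i = j"
    proof (rule ccontr)
      assume "i \<noteq> j"
      then have "i < j \<or> j < i" by auto
      then show False using *[of i j] *[of j i] ij by auto
    qed
  qed
  have orb: "orb R b = (\<lambda>k. (R ^^ k) b) ` {..<n}"
  proof
    show "orb R b \<subseteq> (\<lambda>k. (R ^^ k) b) ` {..<n}"
    proof
      fix y assume "y \<in> orb R b"
      then obtain m where "y = (R ^^ m) b" unfolding orb_def by auto
      then have "y = (R ^^ (m mod n)) b" using funpow_mod_eq[where f=R and n=n and x=b and m=m] n by simp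
      moreover have "m mod n < n" using n by simp
      ultimately show "y \<in> (\<lambda>k. (R ^^ k) b) ` {..<n}" by auto
    qed
    show "(\<lambda>k. (R ^^ k) b) ` {..<n} \<subseteq> orb R b" unfolding orb_def by auto
  qed
  show ?thesis using that n inj orb by blast
qed



lemma vertex_angles:
  fixes R :: "'d \<Rightarrow> 'd"
  assumes n: "0 < n" "(R ^^ n) b = b" and inj: "inj_on (\<lambda>k. (R ^^ k) b) {..<n}"
    and orb: "orb R b = (\<lambda>k. (R ^^ k) b) ` {..<n}"
    and tot: "(\<Sum>d\<in>orb R b. ccw_angle \<phi> R d) = 2*pi"
  shows "(\<Sum>i<n. ccw_angle \<phi> R ((R^^i) b)) = 2*pi"
    "\<And>k. 1 \<le> k \<Longrightarrow> k < n \<Longrightarrow>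
       princ (\<phi> ((R^^k) b) - \<phi> b - pi) = (\<Sum>i<k. ccw_angle \<phi> R ((R^^i) b)) - pi"
proof -
  define S where "S k = (\<Sum>i<k. ccw_angle \<phi> R ((R^^i) b))" for k
  have Sn: "S n = 2*pi"
    unfolding S_def using tot unfolding orb by (simp add: sum.reindex[OF inj])
  then show "(\<Sum>i<n. ccw_angle \<phi> R ((R^^i) b)) = 2*pi" unfolding S_def .
  have cong: "\<exists>m::int. S k = \<phi> ((R^^k) b) - \<phi> b + 2*pi* of_int m" for k
  proof (induction k)
    case 0 then show ?case unfolding S_def by (intro exI[of _ 0]) simp
  next
    case (Suc k)
    then obtain m :: int where m: "S k = \<phi> ((R^^k) b) - \<phi> b + 2*pi* of_int m" by blast
    obtain m' :: int where m': "ccw_angle \<phi> R ((R^^k) b) = \<phi> (R ((R^^k) b)) - \<phi> ((R^^k) b) + 2*pi* of_int m'"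
      using ccw_props(3)[of \<phi> R "(R^^k) b"] by blast
    have "S (Suc k) = S k + ccw_angle \<phi> R ((R^^k) b)" unfolding S_def by simp
    also have "\<dots> = \<phi> ((R^^Suc k) b) - \<phi> b + 2*pi* of_int (m + m')"
      using m m' by (simp add: algebra_simps)
    finally show ?case by blast
  qed
  fix k assume k: "1 \<le> k" "k < n"
  have "0 \<in> {..<k}" using k by simp
  then have ne: "{..<k} \<noteq> {}" by blast
  have pos: "0 < S k" unfolding S_def
    using ne by (intro sum_pos) (auto intro: ccw_props(1))
  have split: "S n = S k + (\<Sum>i\<in>{k..<n}. ccw_angle \<phi> R ((R^^i) b))"
  proof -
    have u: "{..<n} = {..<k} \<union> {k..<n}" using k by auto
    show ?thesis unfolding S_def u by (rule sum.union_disjoint) auto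
  qed
  have "0 < (\<Sum>i\<in>{k..<n}. ccw_angle \<phi> R ((R^^i) b))"
    using k by (intro sum_pos) (auto intro: ccw_props(1))
  then have lt: "S k < 2*pi" using split Sn by simp
  obtain m :: int where m: "S k = \<phi> ((R^^k) b) - \<phi> b + 2*pi* of_int m" using cong by blast
  have eq: "\<phi> ((R^^k) b) - \<phi> b - pi = (S k - pi) + 2*pi* of_int (-m)" using m by simp
  have "-pi < S k - pi" "S k - pi \<le> pi" using pos lt by auto
  then show "princ (\<phi> ((R^^k) b) - \<phi> b - pi) = (\<Sum>i<k. ccw_angle \<phi> R ((R^^i) b)) - pi"
    unfolding eq S_def[symmetric] by (rule princ_shift)
qed



lemma qq_eq:
  assumes "\<forall>z. J (J z) = z"
  shows "qq J R \<phi> r z = cis ((ccw_angle \<phi> R z + r (R z) - r z) / 2)"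
  unfolding qq_def using beta_eq[where J=J and z=z and R=R and \<phi>=\<phi> and r=r] assms by simp

lemma tele_from1:
  fixes W :: "nat \<Rightarrow> complex"
  assumes "1 \<le> n"
  shows "(\<Sum>k\<in>{1..<n}. W k - W (Suc k)) = W 1 - W n"
  using assms
proof (induction n rule: dec_induct)
  case base then show ?case by simp
next
  case (step n)
  then have "{1..<Suc n} = insert n {1..<n}" by auto
  then show ?case using step by simp
qed

lemma KW_M:
  fixes R J :: "'d::finite \<Rightarrow> 'd"
  assumes JJ: "\<forall>e. J (J e) = e" and injR: "inj R"
    and tot: "\<forall>e. (\<Sum>d\<in>orb R e. ccw_angle \<phi> R d) = 2*pi"
  shows "KW J R \<phi> r \<theta> (\<lambda>d. of_real (g d)/Dh d - qq J R \<phi> r d * (of_real (g (R d))/Dh (R d))) e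
   = (of_real (g e)/Dh e - qq J R \<phi> r e * (of_real (g (R e))/Dh (R e)))
     + \<i> * of_real (xw \<theta> e) * (of_real (g (J e))/Dh (J e)
         + qq J R \<phi> r (J e) * (of_real (g (R (J e)))/Dh (R (J e))))"
proof -
  define b where "b = J e"
  define f where "f d = of_real (g d)/Dh d - qq J R \<phi> r d * (of_real (g (R d))/Dh (R d))" for d
  obtain n where n: "0 < n" "(R ^^ n) b = b" and inj: "inj_on (\<lambda>k. (R ^^ k) b) {..<n}"
    and orb: "orb R b = (\<lambda>k. (R ^^ k) b) ` {..<n}"
    using orbit_enum[OF injR, of b] by blast
  define y where "y k = (R ^^ k) b" for k
  define S where "S k = (\<Sum>i<k. ccw_angle \<phi> R (y i))" for k
  have va: "S n = 2*pi"
    "\<And>k. 1 \<le> k \<Longrightarrow> k < n \<Longrightarrow> princ (\<phi> (y k) - \<phi> b - pi) = S k - pi"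
    using vertex_angles[OF n inj orb, of \<phi>] tot unfolding S_def y_def by auto
  have set: "{d \<in> orb R b. d \<noteq> b} = y ` {1..<n}"
  proof
    show "{d \<in> orb R b. d \<noteq> b} \<subseteq> y ` {1..<n}"
    proof
      fix d assume "d \<in> {d \<in> orb R b. d \<noteq> b}"
      then obtain k where "k < n" "d = y k" "d \<noteq> b" using orb unfolding y_def by auto
      then show "d \<in> y ` {1..<n}" unfolding y_def
        by (metis atLeastLessThan_iff funpow_0 image_eqI less_one linorder_not_less)
    qed
    show "y ` {1..<n} \<subseteq> {d \<in> orb R b. d \<noteq> b}"
    proof
      fix d assume "d \<in> y ` {1..<n}"
      then obtain k where k: "1 \<le> k" "k < n" "d = y k" by auto
      have "y k \<noteq> y 0"
        using inj_onD[OF inj, of k 0] k n unfolding y_def by auto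
      then show "d \<in> {d \<in> orb R b. d \<noteq> b}" using k orb unfolding y_def by auto
    qed
  qed
  have injy: "inj_on y {1..<n}" using inj unfolding y_def by (rule inj_on_subset) auto
  define W where "W k = cis ((S k - pi + r (y k) - r b)/2) * (of_real (g (y k)) / Dh (y k))" for k
  have trm: "cis (alpha J \<phi> r e (y k) / 2) * f (y k) = W k - W (Suc k)"
    if k: "1 \<le> k" "k < n" for k
  proof -
    have a: "alpha J \<phi> r e (y k) = S k - pi + r (y k) - r b"
      unfolding alpha_def b_def[symmetric] using va(2)[OF k] by simp
    have ys: "y (Suc k) = R (y k)" unfolding y_def by simp
    have Ss: "S (Suc k) = S k + ccw_angle \<phi> R (y k)" unfolding S_def by simp
    have q: "cis ((S k - pi + r (y k) - r b)/2) * qq J R \<phi> r (y k)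
        = cis ((S (Suc k) - pi + r (y (Suc k)) - r b)/2)"
      unfolding qq_eq[OF JJ] Ss ys cis_mult
      by (rule arg_cong[where f=cis]) (simp add: field_simps)
    show ?thesis unfolding W_def f_def a
      using q ys by (simp add: algebra_simps)
  qed
  have "KW J R \<phi> r \<theta> f e = f e - of_real (xw \<theta> e) *
     (\<Sum>k\<in>{1..<n}. cis (alpha J \<phi> r e (y k) / 2) * f (y k))"
    unfolding KW_def b_def[symmetric] set sum.reindex[OF injy] comp_def by simp
  also have "(\<Sum>k\<in>{1..<n}. cis (alpha J \<phi> r e (y k) / 2) * f (y k))
      = (\<Sum>k\<in>{1..<n}. W k - W (Suc k))"
    using trm by (intro sum.cong) auto
  also have "\<dots> = W 1 - W n" using n by (intro tele_from1) simp
  also have "W n = \<i> * (of_real (g b) / Dh b)"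
    unfolding W_def va(1) using n unfolding y_def by simp
  also have "W 1 = - \<i> * qq J R \<phi> r b * (of_real (g (R b)) / Dh (R b))"
  proof -
    have "S 1 = ccw_angle \<phi> R b" unfolding S_def y_def by simp
    moreover have "y 1 = R b" unfolding y_def by simp
    moreover have "cis ((ccw_angle \<phi> R b - pi + r (R b) - r b)/2) = - \<i> * qq J R \<phi> r b"
      unfolding qq_eq[OF JJ]
    proof -
      have "cis ((ccw_angle \<phi> R b - pi + r (R b) - r b)/2) = cis (-(pi/2)) * cis ((ccw_angle \<phi> R b + r (R b) - r b) / 2)"
        unfolding cis_mult by (rule arg_cong[where f=cis]) (simp add: field_simps)
      then show "cis ((ccw_angle \<phi> R b - pi + r (R b) - r b)/2) = - \<i> * cis ((ccw_angle \<phi> R b + r (R b) - r b) / 2)"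
        by (simp add: cis_minus_pi_half)
    qed
    ultimately show ?thesis unfolding W_def by simp
  qed
  finally show ?thesis unfolding f_def b_def by (simp add: algebra_simps)
qed



lemma shift_surj:
  fixes c :: "'d::finite \<Rightarrow> real" and R :: "'d \<Rightarrow> 'd"
  assumes inj0: "\<And>h. (\<forall>e. h e - c e * h (R e) = 0) \<Longrightarrow> h = (\<lambda>_. 0)"
  shows "\<exists>h. \<forall>e. h e - c e * h (R e) = t e"
proof -
  define \<Psi> :: "real^'d \<Rightarrow> real^'d" where "\<Psi> v = (\<chi> e. v$e - c e * v$(R e))" for v
  have lin: "linear \<Psi>"
    by (rule linearI) (simp_all add: \<Psi>_def vec_eq_iff algebra_simps)
  have inj: "inj \<Psi>"
  proof (rule injI)
    fix v w assume "\<Psi> v = \<Psi> w"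
    then have "\<forall>e. (v-w)$e - c e * (v-w)$(R e) = 0"
      unfolding \<Psi>_def vec_eq_iff by (simp add: algebra_simps)
    then have "(\<lambda>e. (v-w)$e) = (\<lambda>_. 0)" by (rule inj0)
    then show "v = w" by (simp add: vec_eq_iff fun_eq_iff)
  qed
  have "surj \<Psi>" using linear_injective_imp_surjective[OF lin inj] by simp
  then obtain v where "\<Psi> v = (\<chi> e. t e)" by (metis surjD)
  then have "\<forall>e. v$e - c e * v$(R e) = t e" unfolding \<Psi>_def vec_eq_iff by simp
  then show ?thesis by blast
qed



lemma cis_period: "cis (x + 2*pi* of_int m) = cis x"
proof -
  have "cis (x + 2*pi* of_int m) = cis x * cis (2*pi* of_int m)" by (simp only: cis_mult)
  also have "cis (2*pi* of_int m) = 1" by (rule cis_multiple_2pi) simp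
  finally show ?thesis by simp
qed

lemma sign_root:
  fixes z w :: complex
  assumes "z^2 = w^2"
  shows "\<exists>s::real. (s = 1 \<or> s = -1) \<and> z = of_real s * w"
proof -
  have "(z - w) * (z + w) = 0" using assms by (simp add: algebra_simps power2_eq_square)
  then have "z - w = 0 \<or> z + w = 0" by simp
  then have "z = w \<or> z = -w" by (auto simp: algebra_simps eq_neg_iff_add_eq_0)
  then show ?thesis by (metis mult_1 mult_minus1 of_real_1 of_real_minus)
qed

lemma neg_self: "-(z::complex) = z \<Longrightarrow> z = 0"
  by (simp add: complex_eq_iff)

lemma unit_cnj: "cmod z = 1 \<Longrightarrow> cnj z = 1 / z"
proof -
  assume a: "cmod z = 1"
  then have "z \<noteq> 0" by auto
  moreover have "z * cnj z = 1" using complex_norm_square[of z] a by simp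
  ultimately show ?thesis by (simp add: field_simps)
qed

lemma half_tan:
  assumes "0 \<le> t" "t \<le> pi/2"
  shows "cos t * (1 + (tan (t/2))^2) = 1 - (tan (t/2))^2"
    "sin t * (1 + (tan (t/2))^2) = 2 * tan (t/2)"
proof -
  define u where "u = t/2"
  have t: "t = 2*u" unfolding u_def by simp
  have "-(pi/2) < u" "u < pi/2" unfolding u_def using assms pi_gt_zero by linarith+
  then have "cos u > 0" by (intro cos_gt_zero_pi)
  then have c: "cos u \<noteq> 0" by simp
  have sc: "(sin u)^2 + (cos u)^2 = 1" by simp
  show "cos t * (1 + (tan (t/2))^2) = 1 - (tan (t/2))^2"
    unfolding u_def[symmetric] t cos_double tan_def using c sc
    by (simp add: field_simps power2_eq_square)
  show "sin t * (1 + (tan (t/2))^2) = 2 * tan (t/2)"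
    unfolding u_def[symmetric] t sin_double tan_def using c sc
    by (simp add: field_simps power2_eq_square)
qed

locale cw =
  fixes J R :: "'d::finite \<Rightarrow> 'd" and \<phi> r \<theta> om1 om2 om3 :: "'d \<Rightarrow> real" and Dh :: "'d \<Rightarrow> complex"
  assumes JJ: "\<forall>e. J (J e) = e" and injR: "inj R"
   and tot: "\<forall>e. (\<Sum>d\<in>orb R e. ccw_angle \<phi> R d) = 2*pi"
   and th: "\<forall>e. \<theta> (J e) = \<theta> e \<and> 0 \<le> \<theta> e \<and> \<theta> e \<le> pi/2"
   and aJ: "\<forall>e. \<exists>k::int. aang \<phi> r (J e) = aang \<phi> r e + pi + 2*pi*k"
   and sqrtD: "\<forall>e. (Dh e)\<^sup>2 = cis (aang \<phi> r e)"
   and ident: "\<forall>g e.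
        KW J R \<phi> r \<theta>
          (\<lambda>d. of_real (g d) / Dh d - qq J R \<phi> r d * (of_real (g (R d)) / Dh (R d))) e
        = of_real (Kast J R \<theta> om1 om2 om3 g e) / Dh e
          - \<i> * of_real (xw \<theta> e) * (of_real (Kast J R \<theta> om1 om2 om3 g (J e)) / Dh (J e))"
begin

lemma Dh_norm: "cmod (Dh e) = 1"
proof -
  have "(cmod (Dh e))^2 = 1" using sqrtD by (metis norm_cis norm_power)
  then show ?thesis using norm_ge_zero[of "Dh e"] by (auto simp: power2_eq_1_iff)
qed

lemma Dh_nz: "Dh e \<noteq> 0" using Dh_norm[of e] by auto

lemma Dh_cnj: "cnj (Dh e) = 1 / Dh e" using unit_cnj[OF Dh_norm] .

lemma DhJ_sq: "(Dh (J e))^2 = - ((Dh e)^2)"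
proof -
  obtain k :: int where k: "aang \<phi> r (J e) = aang \<phi> r e + pi + 2*pi*k" using aJ by blast
  have "cis (aang \<phi> r (J e)) = cis (aang \<phi> r e + pi)" unfolding k by (rule cis_period)
  also have "\<dots> = - cis (aang \<phi> r e)" by (simp add: cis_mult[symmetric])
  finally show ?thesis using sqrtD by simp
qed

definition tau :: "'d \<Rightarrow> real" where
  "tau e = (if Dh (J e) = \<i> * Dh e then 1 else -1)"

lemma tau_prop: "Dh (J e) = \<i> * of_real (tau e) * Dh e" "tau e = 1 \<or> tau e = -1"
proof -
  have "(Dh (J e))^2 = (\<i> * Dh e)^2" using DhJ_sq by (simp add: power_mult_distrib)
  then obtain s :: real where s: "s = 1 \<or> s = -1" "Dh (J e) = of_real s * (\<i> * Dh e)"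
    using sign_root by blast
  show "Dh (J e) = \<i> * of_real (tau e) * Dh e"
  proof (cases "s = 1")
    case True then show ?thesis using s unfolding tau_def by simp
  next
    case False
    then have "Dh (J e) = - (\<i> * Dh e)" using s by simp
    moreover have "- (\<i> * Dh e) \<noteq> \<i> * Dh e" using Dh_nz[of e] neg_self[of "\<i> * Dh e"] by auto
    ultimately show ?thesis unfolding tau_def by auto
  qed
  show "tau e = 1 \<or> tau e = -1" unfolding tau_def by simp
qed

lemma tau_sq: "tau e * tau e = 1" using tau_prop(2)[of e] by auto

lemma tau_J: "tau (J e) = - tau e"
proof -
  have a: "Dh e = \<i> * of_real (tau (J e)) * Dh (J e)" using tau_prop(1)[of "J e"] JJ by simp
  have b: "Dh (J e) = \<i> * of_real (tau e) * Dh e" by (rule tau_prop(1))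
  have c: "Dh e = - (of_real (tau (J e) * tau e) * Dh e)"
    using a unfolding b by (simp add: algebra_simps)
  show ?thesis
  proof (rule ccontr)
    assume "tau (J e) \<noteq> - tau e"
    then have "tau (J e) * tau e = 1" using tau_prop(2)[of e] tau_prop(2)[of "J e"] by auto
    then have "Dh e = - Dh e" using c by simp
    then show False using neg_self[of "Dh e"] Dh_nz[of e] by auto
  qed
qed

lemma qq_sq: "(qq J R \<phi> r e)^2 = cis (ccw_angle \<phi> R e + r (R e) - r e)"
  unfolding qq_eq[OF JJ] power2_eq_square cis_mult by simp

definition rho :: "'d \<Rightarrow> real" where
  "rho e = (if Dh e * qq J R \<phi> r e = Dh (R e) then 1 else -1)"

lemma rho_prop: "Dh e * qq J R \<phi> r e = of_real (rho e) * Dh (R e)" "rho e = 1 \<or> rho e = -1"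
proof -
  obtain m :: int where m: "ccw_angle \<phi> R e = \<phi> (R e) - \<phi> e + 2*pi* of_int m"
    using ccw_props(3)[of \<phi> R e] by blast
  have "(Dh e * qq J R \<phi> r e)^2 = cis (aang \<phi> r e) * cis (ccw_angle \<phi> R e + r (R e) - r e)"
    using sqrtD qq_sq by (simp add: power_mult_distrib)
  also have "\<dots> = cis (aang \<phi> r (R e) + 2*pi* of_int m)"
    unfolding cis_mult aang_def m by (rule arg_cong[where f=cis]) simp
  also have "\<dots> = (Dh (R e))^2" using sqrtD cis_period by simp
  finally obtain s :: real where s: "s = 1 \<or> s = -1" "Dh e * qq J R \<phi> r e = of_real s * Dh (R e)"
    using sign_root by blast
  show "Dh e * qq J R \<phi> r e = of_real (rho e) * Dh (R e)"
  proof (cases "s = 1")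
    case True then show ?thesis using s unfolding rho_def by simp
  next
    case False
    then have "Dh e * qq J R \<phi> r e = - Dh (R e)" using s by simp
    moreover have "- Dh (R e) \<noteq> Dh (R e)" using Dh_nz[of "R e"] neg_self[of "Dh (R e)"] by auto
    ultimately show ?thesis unfolding rho_def by auto
  qed
  show "rho e = 1 \<or> rho e = -1" unfolding rho_def by simp
qed

lemma qq_div: "qq J R \<phi> r e * (of_real c / Dh (R e)) = of_real (rho e * c) / Dh e"
proof -
  have "qq J R \<phi> r e = of_real (rho e) * Dh (R e) / Dh e"
    using rho_prop(1)[of e] Dh_nz[of e] by (simp add: field_simps)
  then show ?thesis using Dh_nz[of "R e"] by simp
qed

lemma iDhJ: "\<i> * (of_real c / Dh (J e)) = of_real (tau e * c) / Dh e"
proof -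
  have "\<i> * (of_real c / Dh (J e)) = \<i> * of_real c / (\<i> * of_real (tau e) * Dh e)"
    using tau_prop(1)[of e] by simp
  also have "\<dots> = of_real c / (of_real (tau e) * Dh e)" by simp
  also have "\<dots> = of_real (tau e * c) / Dh e"
    using tau_prop(2)[of e] by auto
  finally show ?thesis .
qed

lemma of_real_div_eq: "of_real a / Dh e = of_real b / Dh e \<Longrightarrow> a = b"
  using Dh_nz[of e] by (simp add: field_simps)

lemma M_eq: "of_real (g d) / Dh d - qq J R \<phi> r d * (of_real (g (R d)) / Dh (R d))
   = of_real (g d - rho d * g (R d)) / Dh d"
  unfolding qq_div by (simp add: diff_divide_distrib)

lemma Kast_eq: "Kast J R \<theta> om1 om2 om3 g e = cos (\<theta> e) * g e + tau e * sin (\<theta> e) * g (J e) - rho e * g (R e)"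
proof -
  define K where "K = Kast J R \<theta> om1 om2 om3 g"
  have E: "K d - xw \<theta> d * tau d * K (J d) = g d - rho d * g (R d) + xw \<theta> d * tau d * (g (J d) + rho (J d) * g (R (J d)))" for d
  proof -
    have "\<i> * of_real (xw \<theta> d) * (of_real (K (J d)) / Dh (J d))
        = of_real (xw \<theta> d) * (\<i> * (of_real (K (J d)) / Dh (J d)))" by (simp add: ac_simps)
    also have "\<dots> = of_real (xw \<theta> d) * (of_real (tau d * K (J d)) / Dh d)" by (simp only: iDhJ)
    finally have "of_real (K d) / Dh d - \<i> * of_real (xw \<theta> d) * (of_real (K (J d)) / Dh (J d))
        = of_real (K d - xw \<theta> d * tau d * K (J d)) / Dh d"
      by (simp add: diff_divide_distrib mult.assoc)
    moreover have "KW J R \<phi> r \<theta> (\<lambda>d. of_real (g d) / Dh d - qq J R \<phi> r d * (of_real (g (R d)) / Dh (R d))) d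
       = of_real (g d - rho d * g (R d) + xw \<theta> d * tau d * (g (J d) + rho (J d) * g (R (J d)))) / Dh d"
    proof -
      have "of_real (g (J d)) / Dh (J d) + qq J R \<phi> r (J d) * (of_real (g (R (J d))) / Dh (R (J d)))
          = of_real (g (J d) + rho (J d) * g (R (J d))) / Dh (J d)"
        unfolding qq_div by (simp add: add_divide_distrib)
      then have "\<i> * of_real (xw \<theta> d) * (of_real (g (J d)) / Dh (J d) + qq J R \<phi> r (J d) * (of_real (g (R (J d))) / Dh (R (J d))))
          = of_real (xw \<theta> d) * (\<i> * (of_real (g (J d) + rho (J d) * g (R (J d))) / Dh (J d)))"
        by (simp add: ac_simps)
      also have "\<dots> = of_real (xw \<theta> d) * (of_real (tau d * (g (J d) + rho (J d) * g (R (J d)))) / Dh d)"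
        by (simp only: iDhJ)
      finally have "\<i> * of_real (xw \<theta> d) * (of_real (g (J d)) / Dh (J d) + qq J R \<phi> r (J d) * (of_real (g (R (J d))) / Dh (R (J d))))
          = of_real (xw \<theta> d * tau d * (g (J d) + rho (J d) * g (R (J d)))) / Dh d"
        by (simp add: mult.assoc)
      note fin = this
      show ?thesis
        apply (subst KW_M[OF JJ injR tot])
        apply (subst fin)
        apply (subst M_eq)
        by (simp add: add_divide_distrib)
    qed
    ultimately have "of_real (g d - rho d * g (R d) + xw \<theta> d * tau d * (g (J d) + rho (J d) * g (R (J d)))) / Dh d
        = of_real (K d - xw \<theta> d * tau d * K (J d)) / Dh d"
      using ident[rule_format, of g d] unfolding K_def by simp
    then show ?thesis by (rule of_real_div_eq[symmetric])
  qed
  define x where "x = xw \<theta> e"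
  have xJ: "xw \<theta> (J e) = x" unfolding x_def xw_def using th by simp
  have E1: "K e - x * tau e * K (J e) = g e - rho e * g (R e) + x * tau e * (g (J e) + rho (J e) * g (R (J e)))"
    using E[of e] unfolding x_def .
  have E2: "K (J e) + x * tau e * K e = g (J e) - rho (J e) * g (R (J e)) - x * tau e * (g e + rho e * g (R e))"
    using E[of "J e"] unfolding xJ tau_J JJ[rule_format] by (simp add: algebra_simps)
  have h1: "cos (\<theta> e) * (1 + x^2) = 1 - x^2" and h2: "sin (\<theta> e) * (1 + x^2) = 2 * x"
    using half_tan[of "\<theta> e"] th unfolding x_def xw_def by auto
  have "(1 + x^2) * K e = (K e - x * tau e * K (J e)) + x * tau e * (K (J e) + x * tau e * K e)"
    using tau_sq[of e] by (simp add: algebra_simps power2_eq_square)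
  also have "\<dots> = (1 - x^2) * g e + 2 * x * tau e * g (J e) - (1 + x^2) * rho e * g (R e)"
    unfolding E1 E2 using tau_sq[of e] by (simp add: algebra_simps power2_eq_square)
  also have "\<dots> = (cos (\<theta> e) * (1 + x^2)) * g e + tau e * (sin (\<theta> e) * (1 + x^2)) * g (J e) - (1 + x^2) * rho e * g (R e)"
    unfolding h1 h2 by (simp add: algebra_simps)
  also have "\<dots> = (1 + x^2) * (cos (\<theta> e) * g e + tau e * sin (\<theta> e) * g (J e) - rho e * g (R e))"
    by (simp add: algebra_simps)
  moreover have "1 + x^2 \<noteq> 0" by (metis add_pos_nonneg zero_le_power2 zero_less_one less_irrefl)
  ultimately show ?thesis unfolding K_def by simp
qed

end


lemma Pr_unit: "cmod u = 1 \<Longrightarrow> Pr z u = of_real (Re (z * cnj u)) * u"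
  unfolding Pr_def by simp

lemma Pr_neg: "Pr z (- u) = Pr z u"
proof -
  have h: "Re (z * cnj (-u)) = - Re (z * cnj u)" by simp
  have g: "of_real (- a / n) * (- v) = of_real (a / n) * (v::complex)" for a n v by simp
  show ?thesis unfolding Pr_def norm_minus_cancel h by (rule g)
qed

lemma Pr_sign: "s = 1 \<or> s = -1 \<Longrightarrow> Pr z (of_real s * u) = Pr z u"
  using Pr_neg[of z u] by auto

context cw begin

lemma cis_half_a: "\<exists>s. (s = 1 \<or> s = -1) \<and> cis (- aang \<phi> r e / 2) = of_real s * cnj (Dh e)"
proof -
  have "(cis (- aang \<phi> r e / 2))^2 = cis (- aang \<phi> r e)"
    unfolding power2_eq_square cis_mult by simp
  also have "\<dots> = cnj ((Dh e)^2)" using sqrtD by (simp add: cis_cnj)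
  also have "\<dots> = (cnj (Dh e))^2" by simp
  finally show ?thesis by (rule sign_root)
qed

lemma cnj_Dh_norm: "cmod (cnj (Dh e)) = 1" using Dh_norm by simp

lemma Dh_cnj_mult: "Dh e * cnj (Dh e) = 1" using Dh_cnj[of e] Dh_nz[of e] by simp

lemma Tt_J: "F \<in> CD J \<Longrightarrow> Tt Dh \<theta> F (J e) = - tau e * Re (cis (- \<theta> e / 2) * (Dh e * F e))"
proof -
  assume F: "F \<in> CD J"
  have "Tt Dh \<theta> F (J e) = Re (\<i> * (\<i> * of_real (tau e) * Dh e) * cis (- \<theta> e / 2) * F e)"
    unfolding Tt_def using F th tau_prop(1)[of e] unfolding CD_def by simp
  also have "\<dots> = - tau e * Re (cis (- \<theta> e / 2) * (Dh e * F e))"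
    by (simp add: algebra_simps)
  finally show ?thesis .
qed

lemma Tt_e: "Tt Dh \<theta> F e = Re (\<i> * cis (- \<theta> e / 2) * (Dh e * F e))"
  unfolding Tt_def by (simp add: algebra_simps)

lemma A_eq:
  assumes "F \<in> CD J"
  shows "Re (\<i> * cis (\<theta> e / 2) * (Dh e * F e))
     = cos (\<theta> e) * Tt Dh \<theta> F e + tau e * sin (\<theta> e) * Tt Dh \<theta> F (J e)"
proof -
  define w where "w = cis (- \<theta> e / 2) * (Dh e * F e)"
  have "\<i> * cis (\<theta> e / 2) * (Dh e * F e) = \<i> * cis (\<theta> e) * w"
    unfolding w_def by (simp add: mult.assoc cis_mult)
  moreover have "Tt Dh \<theta> F e = - Im w" unfolding Tt_e w_def by (simp add: mult.assoc)
  moreover have "Tt Dh \<theta> F (J e) = - tau e * Re w" unfolding Tt_J[OF assms] w_def ..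
  ultimately show ?thesis using tau_sq[of e] by (simp add: algebra_simps)
qed

lemma cis_split: "a = b + c \<Longrightarrow> cis a = cis b * cis c"
  by (simp add: cis_mult)

lemma shol_iff:
  assumes F: "F \<in> CD J"
  shows "shol_at J R \<phi> r \<theta> (\<lambda>d. cis (pi/4) * F d) e \<longleftrightarrow>
     Re (\<i> * cis (\<theta> e / 2) * (Dh e * F e)) = rho e * Tt Dh \<theta> F (R e)"
proof -
  define A where "A = Re (\<i> * cis (\<theta> e / 2) * (Dh e * F e))"
  define w1 where "w1 = cis (-(pi/4) - \<theta> e / 2) * cnj (Dh e)"
  define w2 where "w2 = cis (-(pi/4) + \<theta> (R e) / 2) * cnj (Dh (R e))"
  obtain s1 where s1: "s1 = 1 \<or> s1 = -1" "cis (- aang \<phi> r e / 2) = of_real s1 * cnj (Dh e)"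
    using cis_half_a by blast
  obtain s2 where s2: "s2 = 1 \<or> s2 = -1" "cis (- aang \<phi> r (R e) / 2) = of_real s2 * cnj (Dh (R e))"
    using cis_half_a by blast
  have w1n: "cmod w1 = 1" unfolding w1_def by (simp add: norm_mult Dh_norm)
  have w2n: "cmod w2 = 1" unfolding w2_def by (simp add: norm_mult Dh_norm)
  have w1nz: "w1 \<noteq> 0" using w1n by auto
  have v1: "cis (- (pi / 2 + aang \<phi> r e + \<theta> e) / 2) = of_real s1 * w1"
  proof -
    have "cis (- (pi / 2 + aang \<phi> r e + \<theta> e) / 2) = cis (-(pi/4) - \<theta> e / 2) * cis (- aang \<phi> r e / 2)"
      by (rule cis_split) (simp add: field_simps)
    then show ?thesis unfolding s1(2) w1_def by (simp add: ac_simps)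
  qed
  have v2: "cis (- (pi / 2 + aang \<phi> r (R e) - \<theta> (R e)) / 2) = of_real s2 * w2"
  proof -
    have "cis (- (pi / 2 + aang \<phi> r (R e) - \<theta> (R e)) / 2) = cis (-(pi/4) + \<theta> (R e) / 2) * cis (- aang \<phi> r (R e) / 2)"
      by (rule cis_split) (simp add: field_simps)
    then show ?thesis unfolding s2(2) w2_def by (simp add: ac_simps)
  qed
  have L: "Pr (cis (pi/4) * F e) (cis (- (pi / 2 + aang \<phi> r e + \<theta> e) / 2)) = of_real A * w1"
  proof -
    have "cis (pi/4) * F e * cnj w1 = cis (pi/4) * cis (pi/4 + \<theta> e / 2) * (Dh e * F e)"
      unfolding w1_def by (simp add: cis_cnj ac_simps)
    also have "cis (pi/4) * cis (pi/4 + \<theta> e / 2) = \<i> * cis (\<theta> e / 2)"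
      unfolding cis_mult by (subst cis_split[of _ "pi/2" "\<theta> e / 2"]) (simp_all add: field_simps)
    finally have eq: "cis (pi/4) * F e * cnj w1 = \<i> * cis (\<theta> e / 2) * (Dh e * F e)" .
    show ?thesis unfolding v1 Pr_sign[OF s1(1)] Pr_unit[OF w1n] eq A_def by (rule refl)
  qed
  have Rt: "Pr (cis (pi/4) * F (R e)) (cis (- (pi / 2 + aang \<phi> r (R e) - \<theta> (R e)) / 2))
      = of_real (Tt Dh \<theta> F (R e)) * w2"
  proof -
    have "cis (pi/4) * F (R e) * cnj w2 = cis (pi/4) * cis (pi/4 - \<theta> (R e) / 2) * (Dh (R e) * F (R e))"
      unfolding w2_def by (simp add: cis_cnj ac_simps)
    also have "cis (pi/4) * cis (pi/4 - \<theta> (R e) / 2) = \<i> * cis (- \<theta> (R e) / 2)"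
      unfolding cis_mult by (subst cis_split[of _ "pi/2" "- \<theta> (R e) / 2"]) (simp_all add: field_simps)
    finally have eq: "cis (pi/4) * F (R e) * cnj w2 = \<i> * cis (- \<theta> (R e) / 2) * (Dh (R e) * F (R e))" .
    show ?thesis unfolding v2 Pr_sign[OF s2(1)] Pr_unit[OF w2n] eq Tt_e by (rule refl)
  qed
  have W: "w2 * cis ((beta J R \<phi> r e - \<theta> e - \<theta> (R e)) / 2) = of_real (rho e) * w1"
  proof -
    have W1: "w2 * cis ((beta J R \<phi> r e - \<theta> e - \<theta> (R e)) / 2)
        = cis (-(pi/4) - \<theta> e / 2) * (qq J R \<phi> r e * cnj (Dh (R e)))"
    proof -
      have "cis (-(pi/4) + \<theta> (R e) / 2) * cis ((beta J R \<phi> r e - \<theta> e - \<theta> (R e)) / 2)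
          = cis (-(pi/4) - \<theta> e / 2) * cis (beta J R \<phi> r e / 2)"
        unfolding cis_mult by (rule arg_cong[where f=cis]) (simp add: field_simps)
      then show ?thesis unfolding w2_def qq_def by (simp add: ac_simps)
    qed
    have W2: "qq J R \<phi> r e * cnj (Dh (R e)) = of_real (rho e) * cnj (Dh e)"
    proof -
      have "qq J R \<phi> r e = of_real (rho e) * Dh (R e) / Dh e"
        using rho_prop(1)[of e] Dh_nz[of e] by (simp add: field_simps)
      then show ?thesis using Dh_nz[of e] Dh_nz[of "R e"] unfolding Dh_cnj by simp
    qed
    show ?thesis unfolding W1 W2 w1_def by (simp add: ac_simps)
  qed
  have "shol_at J R \<phi> r \<theta> (\<lambda>d. cis (pi/4) * F d) e \<longleftrightarrow>
      of_real A * w1 = of_real (Tt Dh \<theta> F (R e)) * (of_real (rho e) * w1)"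
    unfolding shol_at_def L Rt mult.assoc[symmetric] by (simp add: W mult.assoc)
  also have "\<dots> \<longleftrightarrow> A = rho e * Tt Dh \<theta> F (R e)"
    using w1nz by (simp add: mult.assoc[symmetric] mult.commute[of "of_real (rho e)"])
       (metis of_real_eq_iff of_real_mult mult.commute)
  finally show ?thesis unfolding A_def .
qed

end


context cw begin

lemma shol_Kast:
  assumes F: "F \<in> CD J"
  shows "shol_at J R \<phi> r \<theta> (\<lambda>d. cis (pi/4) * F d) e \<longleftrightarrow> Kast J R \<theta> om1 om2 om3 (Tt Dh \<theta> F) e = 0"
  unfolding shol_iff[OF F] A_eq[OF F] Kast_eq by auto

lemma sO_iff: "F \<in> sO J R \<phi> r \<theta> \<longleftrightarrow> F \<in> CD J \<and> Kast J R \<theta> om1 om2 om3 (Tt Dh \<theta> F) = (\<lambda>_. 0)"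
  unfolding sO_def using shol_Kast by (auto simp: fun_eq_iff)

lemma SS_formula: "SS \<phi> r \<theta> F e = of_real (sin (\<theta> e / 2) * Re (Dh e * F e)) / Dh e"
proof -
  obtain s where s: "s = 1 \<or> s = -1" "cis (- aang \<phi> r e / 2) = of_real s * cnj (Dh e)"
    using cis_half_a by blast
  have "Pr (F e) (cis (- aang \<phi> r e / 2)) = of_real (Re (F e * Dh e)) * cnj (Dh e)"
    unfolding s(2) Pr_sign[OF s(1)] Pr_unit[OF cnj_Dh_norm] by simp
  then show ?thesis unfolding SS_def Dh_cnj by (simp add: ac_simps)
qed

lemma SS_sO:
  assumes F: "F \<in> sO J R \<phi> r \<theta>"
  shows "SS \<phi> r \<theta> F e = of_real (Tt Dh \<theta> F e / 2 - rho e * (Tt Dh \<theta> F (R e) / 2)) / Dh e"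
proof -
  have CD: "F \<in> CD J" using F unfolding sO_def by auto
  have sh: "shol_at J R \<phi> r \<theta> (\<lambda>d. cis (pi/4) * F d) e" using F unfolding sO_def by auto
  have A: "Re (\<i> * cis (\<theta> e / 2) * (Dh e * F e)) = rho e * Tt Dh \<theta> F (R e)"
    using sh unfolding shol_iff[OF CD] .
  define z where "z = Dh e * F e"
  have "Tt Dh \<theta> F e - Re (\<i> * cis (\<theta> e / 2) * (Dh e * F e)) = 2 * sin (\<theta> e / 2) * Re (Dh e * F e)"
    unfolding Tt_e z_def[symmetric] by (simp add: algebra_simps)
  then have "sin (\<theta> e / 2) * Re (Dh e * F e) = Tt Dh \<theta> F e / 2 - rho e * (Tt Dh \<theta> F (R e) / 2)"
    unfolding A by simp
  then show ?thesis unfolding SS_formula by simp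
qed

lemma Tp_formula: "Tp Dh \<phi> r \<theta> F e = cis (\<theta> e / 2) * of_real (Tt Dh \<theta> F e)"
proof -
  obtain s where s: "s = 1 \<or> s = -1" "cis (- aang \<phi> r e / 2) = of_real s * cnj (Dh e)"
    using cis_half_a by blast
  define u where "u = \<i> * cis (\<theta> e / 2) * cnj (Dh e)"
  have un: "cmod u = 1" unfolding u_def by (simp add: norm_mult Dh_norm)
  have "\<i> * cis (- (aang \<phi> r e - \<theta> e) / 2) = \<i> * (cis (\<theta> e / 2) * cis (- aang \<phi> r e / 2))"
    by (subst cis_split[of _ "\<theta> e / 2" "- aang \<phi> r e / 2"]) (simp_all add: field_simps)
  also have "\<dots> = of_real s * u" unfolding s(2) u_def by (simp add: ac_simps)
  finally have v: "\<i> * cis (- (aang \<phi> r e - \<theta> e) / 2) = of_real s * u" .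
  have cu: "F e * cnj u = - (\<i> * Dh e * cis (- \<theta> e / 2) * F e)"
    unfolding u_def by (simp add: cis_cnj ac_simps)
  have "Tp Dh \<phi> r \<theta> F e = \<i> * Dh e * (of_real (- Tt Dh \<theta> F e) * u)"
    unfolding Tp_def v Pr_sign[OF s(1)] Pr_unit[OF un] cu Tt_def by simp
  also have "\<dots> = of_real (Tt Dh \<theta> F e) * cis (\<theta> e / 2) * (Dh e * cnj (Dh e))"
    unfolding u_def by (simp add: ac_simps)
  finally show ?thesis unfolding Dh_cnj_mult by simp
qed

end


context cw begin

lemma dbar_formula:
  "dbar J R \<theta> om1 om2 om3 (\<lambda>d. cis (\<theta> d / 2) * of_real (k d)) e
    = inverse (of_real (sin (2 * \<theta> e))) * (cis (\<theta> e / 2) * of_real (Kast J R \<theta> om1 om2 om3 k e))"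
proof -
  have c: "cis (\<theta> e) * cis (- (\<theta> e + \<theta> (R e)) / 2) * cis (\<theta> (R e) / 2) = cis (\<theta> e / 2)"
    unfolding cis_mult by (rule arg_cong[where f=cis]) (simp add: field_simps)
  have tJ: "\<theta> (J e) = \<theta> e" using th by simp
  have ii: "\<i> * (- \<i> * x) = x" for x by simp
  show ?thesis unfolding dbar_def Kast_def tJ ii
    using c by (simp add: algebra_simps)
qed

definition Finv :: "('d \<Rightarrow> real) \<Rightarrow> 'd \<Rightarrow> complex" where
  "Finv k e = - cnj (Dh e * cis (- \<theta> e / 2)) * (of_real (tau e * k (J e)) + \<i> * of_real (k e))"

lemma w_unit: "Dh e * cis (- \<theta> e / 2) * cnj (Dh e * cis (- \<theta> e / 2)) = 1"
proof -
  have "Dh e * cis (- \<theta> e / 2) * cnj (Dh e * cis (- \<theta> e / 2))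
      = (Dh e * cnj (Dh e)) * (cis (- \<theta> e / 2) * cnj (cis (- \<theta> e / 2)))" by (simp add: ac_simps)
  also have "\<dots> = 1" unfolding Dh_cnj_mult by (simp add: cis_cnj cis_mult)
  finally show ?thesis .
qed

lemma Finv_CD: "Finv k \<in> CD J"
  unfolding CD_def
proof (intro CollectI allI)
  fix e
  have t: "tau (J e) = - tau e" by (rule tau_J)
  have tJ: "\<theta> (J e) = \<theta> e" using th by simp
  have D: "Dh (J e) = \<i> * of_real (tau e) * Dh e" by (rule tau_prop(1))
  show "Finv k (J e) = Finv k e"
    using tau_prop(2)[of e]
  proof
    assume "tau e = 1"
    then show ?thesis unfolding Finv_def t tJ D JJ[rule_format]
      by (simp add: algebra_simps)
  next
    assume "tau e = -1"
    then show ?thesis unfolding Finv_def t tJ D JJ[rule_format]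
      by (simp add: algebra_simps)
  qed
qed

lemma Tt_Finv: "Tt Dh \<theta> (Finv k) = k"
proof
  fix e
  define w where "w = Dh e * cis (- \<theta> e / 2)"
  have wu: "w * cnj w = 1" unfolding w_def by (rule w_unit)
  have "\<i> * Dh e * cis (- \<theta> e / 2) * Finv k e = - \<i> * (w * cnj w) * (of_real (tau e * k (J e)) + \<i> * of_real (k e))"
    unfolding Finv_def w_def by (simp add: ac_simps)
  also have "\<dots> = of_real (k e) - \<i> * of_real (tau e * k (J e))" unfolding wu by (simp add: algebra_simps)
  finally show "Tt Dh \<theta> (Finv k) e = k e" unfolding Tt_def by simp
qed

lemma Finv_Tt:
  assumes F: "F \<in> CD J"
  shows "Finv (Tt Dh \<theta> F) = F"
proof
  fix e
  define w where "w = Dh e * cis (- \<theta> e / 2)"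
  have wu: "cnj w * w = 1" using w_unit[of e] unfolding w_def by (simp add: ac_simps)
  define z where "z = w * F e"
  have g1: "Tt Dh \<theta> F e = - Im z" unfolding Tt_def z_def w_def by (simp add: ac_simps)
  have g2: "Tt Dh \<theta> F (J e) = - tau e * Re z" unfolding Tt_J[OF F] z_def w_def by (simp add: ac_simps)
  have "of_real (tau e * Tt Dh \<theta> F (J e)) + \<i> * of_real (Tt Dh \<theta> F e) = - z"
    unfolding g1 g2 using tau_sq[of e] by (simp add: complex_eq_iff mult.assoc[symmetric])
  then have "Finv (Tt Dh \<theta> F) e = cnj w * w * F e" unfolding Finv_def w_def[symmetric] z_def by simp
  then show "Finv (Tt Dh \<theta> F) e = F e" unfolding wu by simp
qed

lemma Phi_inj:
  assumes h: "\<forall>e. h e = rho e * h (R e)"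
  shows "h b = 0"
proof -
  obtain n where n: "0 < n" "(R ^^ n) b = b" and inj: "inj_on (\<lambda>k. (R ^^ k) b) {..<n}"
    and orb: "orb R b = (\<lambda>k. (R ^^ k) b) ` {..<n}"
    using orbit_enum[OF injR, of b] by blast
  define y where "y k = (R ^^ k) b" for k
  define B where "B z = ccw_angle \<phi> R z + r (R z) - r z" for z
  have ys: "y (Suc k) = R (y k)" for k unfolding y_def by simp
  have claim: "of_real (h b) = cis ((\<Sum>i<k. B (y i)) / 2) * (Dh b / Dh (y k)) * of_real (h (y k))" for k
  proof (induction k)
    case 0 then show ?case using Dh_nz[of b] unfolding y_def by simp
  next
    case (Suc k)
    have r: "of_real (rho z) = Dh z * qq J R \<phi> r z / Dh (R z)" for z
      using rho_prop(1)[of z] Dh_nz[of "R z"] by (simp add: field_simps)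
    have "of_real (h (y k)) = Dh (y k) * cis (B (y k) / 2) / Dh (y (Suc k)) * of_real (h (y (Suc k)))"
      using h r[of "y k"] unfolding ys qq_eq[OF JJ] B_def by (metis of_real_mult)
    then have "of_real (h b) = (cis ((\<Sum>i<k. B (y i)) / 2) * cis (B (y k) / 2)) * (Dh b / Dh (y (Suc k))) * (Dh (y k) / Dh (y k)) * of_real (h (y (Suc k)))"
      using Suc.IH by (simp add: ac_simps)
    also have "cis ((\<Sum>i<k. B (y i)) / 2) * cis (B (y k) / 2) = cis ((\<Sum>i<Suc k. B (y i)) / 2)"
      unfolding cis_mult by (simp add: add_divide_distrib)
    finally show ?case using Dh_nz[of "y k"] by simp
  qed
  have "(\<Sum>i<n. B (y i)) = (\<Sum>i<n. ccw_angle \<phi> R (y i)) + (\<Sum>i<n. r (y (Suc i)) - r (y i))"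
    unfolding B_def ys by (simp add: sum.distrib[symmetric] algebra_simps)
  also have "(\<Sum>i<n. ccw_angle \<phi> R (y i)) = 2*pi"
    using vertex_angles(1)[OF n inj orb, of \<phi>] tot unfolding y_def by auto
  also have "(\<Sum>i<n. r (y (Suc i)) - r (y i)) = 0"
    using sum_lessThan_telescope[of "\<lambda>i. r (y i)" n] n unfolding y_def by simp
  finally have "(\<Sum>i<n. B (y i)) = 2*pi" by simp
  then have "of_real (h b) = - of_real (h b)" using claim[of n] n Dh_nz[of b] unfolding y_def by simp
  then show ?thesis by simp
qed

end


context cw begin

lemma N_inj:
  assumes N: "\<forall>e. of_real (K e) / Dh e - \<i> * of_real (xw \<theta> e) * (of_real (K (J e)) / Dh (J e)) = 0"
  shows "K e = 0"
proof -
  have E: "K d - xw \<theta> d * tau d * K (J d) = 0" for d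
  proof -
    have "\<i> * of_real (xw \<theta> d) * (of_real (K (J d)) / Dh (J d))
        = of_real (xw \<theta> d) * (\<i> * (of_real (K (J d)) / Dh (J d)))" by (simp add: ac_simps)
    also have "\<dots> = of_real (xw \<theta> d) * (of_real (tau d * K (J d)) / Dh d)" by (simp only: iDhJ)
    finally have "of_real (K d) / Dh d - \<i> * of_real (xw \<theta> d) * (of_real (K (J d)) / Dh (J d))
        = of_real (K d - xw \<theta> d * tau d * K (J d)) / Dh d"
      by (simp add: diff_divide_distrib mult.assoc)
    then have "of_real (K d - xw \<theta> d * tau d * K (J d)) / Dh d = of_real 0 / Dh d" using N by simp
    then show ?thesis by (rule of_real_div_eq)
  qed
  define x where "x = xw \<theta> e"
  have xJ: "xw \<theta> (J e) = x" unfolding x_def xw_def using th by simp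
  have E1: "K e = x * tau e * K (J e)" using E[of e] unfolding x_def by simp
  have E2: "K (J e) = - x * tau e * K e" using E[of "J e"] unfolding xJ tau_J JJ[rule_format] by simp
  have "K e = - (x * x) * (tau e * tau e) * K e" using E1 E2 by (simp add: algebra_simps)
  then have "(1 + x * x) * K e = 0" using tau_sq[of e] by (simp add: algebra_simps)
  moreover have "1 + x * x > 0" by (simp add: add_pos_nonneg)
  ultimately show ?thesis by simp
qed

lemma Phi_inj0: "(\<forall>e. h e - rho e * h (R e) = 0) \<Longrightarrow> h = (\<lambda>_. 0)"
proof
  fix e assume a: "\<forall>e. h e - rho e * h (R e) = 0"
  have "\<forall>e. h e = rho e * h (R e)"
  proof
    fix e show "h e = rho e * h (R e)" using a[rule_format, of e] by linarith
  qed
  then show "h e = 0" by (rule Phi_inj)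
qed

lemma Kast_half: "Kast J R \<theta> om1 om2 om3 (\<lambda>d. c * g d) e = c * Kast J R \<theta> om1 om2 om3 g e"
  unfolding Kast_def by (simp add: algebra_simps)

lemma KW_M_Kast:
  "KW J R \<phi> r \<theta> (\<lambda>d. of_real (k d - rho d * k (R d)) / Dh d) e
   = of_real (Kast J R \<theta> om1 om2 om3 k e) / Dh e
     - \<i> * of_real (xw \<theta> e) * (of_real (Kast J R \<theta> om1 om2 om3 k (J e)) / Dh (J e))"
  using ident[rule_format, of k e] unfolding M_eq .

lemma partii: "bij_betw (Tt Dh \<theta>) (sO J R \<phi> r \<theta>) {g. Kast J R \<theta> om1 om2 om3 g = (\<lambda>_. 0)}"
  unfolding bij_betw_def
proof
  show "inj_on (Tt Dh \<theta>) (sO J R \<phi> r \<theta>)"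
  proof (rule inj_onI)
    fix F F' assume F: "F \<in> sO J R \<phi> r \<theta>" and F': "F' \<in> sO J R \<phi> r \<theta>" and eq: "Tt Dh \<theta> F = Tt Dh \<theta> F'"
    have c: "F \<in> CD J" "F' \<in> CD J" using F F' unfolding sO_def by auto
    have "F = Finv (Tt Dh \<theta> F)" using Finv_Tt[OF c(1)] by simp
    also have "\<dots> = Finv (Tt Dh \<theta> F')" unfolding eq ..
    also have "\<dots> = F'" using Finv_Tt[OF c(2)] .
    finally show "F = F'" .
  qed
  show "Tt Dh \<theta> ` sO J R \<phi> r \<theta> = {g. Kast J R \<theta> om1 om2 om3 g = (\<lambda>_. 0)}"
  proof
    show "Tt Dh \<theta> ` sO J R \<phi> r \<theta> \<subseteq> {g. Kast J R \<theta> om1 om2 om3 g = (\<lambda>_. 0)}"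
    proof
      fix g assume "g \<in> Tt Dh \<theta> ` sO J R \<phi> r \<theta>"
      then obtain F where "F \<in> sO J R \<phi> r \<theta>" "g = Tt Dh \<theta> F" by blast
      then show "g \<in> {g. Kast J R \<theta> om1 om2 om3 g = (\<lambda>_. 0)}" using sO_iff[of F] by simp
    qed
    show "{g. Kast J R \<theta> om1 om2 om3 g = (\<lambda>_. 0)} \<subseteq> Tt Dh \<theta> ` sO J R \<phi> r \<theta>"
    proof
      fix g assume g: "g \<in> {g. Kast J R \<theta> om1 om2 om3 g = (\<lambda>_. 0)}"
      have "Finv g \<in> sO J R \<phi> r \<theta>" unfolding sO_iff[of "Finv g"] Tt_Finv using Finv_CD g by simp
      moreover have "g = Tt Dh \<theta> (Finv g)" unfolding Tt_Finv ..
      ultimately show "g \<in> Tt Dh \<theta> ` sO J R \<phi> r \<theta>" by blast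
    qed
  qed
qed

lemma SS_M: "F \<in> sO J R \<phi> r \<theta> \<Longrightarrow>
  SS \<phi> r \<theta> F = (\<lambda>d. of_real ((\<lambda>d. Tt Dh \<theta> F d / 2) d - rho d * (\<lambda>d. Tt Dh \<theta> F d / 2) (R d)) / Dh d)"
  using SS_sO by auto

lemma LL_form: "f \<in> LL \<phi> r \<Longrightarrow> f e = of_real (Re (f e * Dh e)) / Dh e"
proof -
  assume "f \<in> LL \<phi> r"
  then obtain t :: real where t: "f e = cis (- aang \<phi> r e / 2) * of_real t" unfolding LL_def by blast
  obtain s where s: "s = 1 \<or> s = -1" "cis (- aang \<phi> r e / 2) = of_real s * cnj (Dh e)"
    using cis_half_a by blast
  have "f e = of_real (s * t) / Dh e" unfolding t s(2) Dh_cnj by simp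
  then show ?thesis using Dh_nz[of e] by simp
qed

lemma parti: "bij_betw (SS \<phi> r \<theta>) (sO J R \<phi> r \<theta>) (LL \<phi> r \<inter> {f. KW J R \<phi> r \<theta> f = (\<lambda>_. 0)})"
  unfolding bij_betw_def
proof
  show "inj_on (SS \<phi> r \<theta>) (sO J R \<phi> r \<theta>)"
  proof (rule inj_onI)
    fix F F' assume F: "F \<in> sO J R \<phi> r \<theta>" and F': "F' \<in> sO J R \<phi> r \<theta>" and eq: "SS \<phi> r \<theta> F = SS \<phi> r \<theta> F'"
    define h where "h d = Tt Dh \<theta> F d / 2 - Tt Dh \<theta> F' d / 2" for d
    have "\<forall>e. h e = rho e * h (R e)"
    proof
      fix e
      have "SS \<phi> r \<theta> F e = SS \<phi> r \<theta> F' e" using eq by (rule fun_cong)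
      then have "of_real (Tt Dh \<theta> F e / 2 - rho e * (Tt Dh \<theta> F (R e) / 2)) / Dh e
          = of_real (Tt Dh \<theta> F' e / 2 - rho e * (Tt Dh \<theta> F' (R e) / 2)) / Dh e"
        by (simp only: SS_sO[OF F] SS_sO[OF F'])
      then have "Tt Dh \<theta> F e / 2 - rho e * (Tt Dh \<theta> F (R e) / 2) = Tt Dh \<theta> F' e / 2 - rho e * (Tt Dh \<theta> F' (R e) / 2)"
        by (rule of_real_div_eq)
      then show "h e = rho e * h (R e)" unfolding h_def by (simp add: algebra_simps)
    qed
    then have h0: "h e = 0" for e by (rule Phi_inj)
    have TT: "Tt Dh \<theta> F = Tt Dh \<theta> F'"
    proof
      fix e show "Tt Dh \<theta> F e = Tt Dh \<theta> F' e" using h0[of e] unfolding h_def by simp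
    qed
    have c: "F \<in> CD J" "F' \<in> CD J" using F F' unfolding sO_def by auto
    have "F = Finv (Tt Dh \<theta> F)" using Finv_Tt[OF c(1)] by simp
    also have "\<dots> = Finv (Tt Dh \<theta> F')" unfolding TT ..
    also have "\<dots> = F'" using Finv_Tt[OF c(2)] .
    finally show "F = F'" .
  qed
  show "SS \<phi> r \<theta> ` sO J R \<phi> r \<theta> = LL \<phi> r \<inter> {f. KW J R \<phi> r \<theta> f = (\<lambda>_. 0)}"
  proof
    show "SS \<phi> r \<theta> ` sO J R \<phi> r \<theta> \<subseteq> LL \<phi> r \<inter> {f. KW J R \<phi> r \<theta> f = (\<lambda>_. 0)}"
    proof
      fix f assume "f \<in> SS \<phi> r \<theta> ` sO J R \<phi> r \<theta>"
      then obtain F where F: "F \<in> sO J R \<phi> r \<theta>" and f: "f = SS \<phi> r \<theta> F" by auto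
      have K0: "Kast J R \<theta> om1 om2 om3 (Tt Dh \<theta> F) = (\<lambda>_. 0)" using F sO_iff[of F] by simp
      have "KW J R \<phi> r \<theta> f e = 0" for e
      proof -
        have "KW J R \<phi> r \<theta> f e = of_real (Kast J R \<theta> om1 om2 om3 (\<lambda>d. Tt Dh \<theta> F d / 2) e) / Dh e
          - \<i> * of_real (xw \<theta> e) * (of_real (Kast J R \<theta> om1 om2 om3 (\<lambda>d. Tt Dh \<theta> F d / 2) (J e)) / Dh (J e))"
          unfolding f SS_M[OF F] by (rule KW_M_Kast)
        also have "\<dots> = 0"
        proof -
          have hf: "(\<lambda>d. Tt Dh \<theta> F d / 2) = (\<lambda>d. (1/2) * Tt Dh \<theta> F d)" by auto
          have "Kast J R \<theta> om1 om2 om3 (\<lambda>d. Tt Dh \<theta> F d / 2) x = 0" for x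
            unfolding hf Kast_half using fun_cong[OF K0, of x] by simp
          then show ?thesis by simp
        qed
        finally show ?thesis .
      qed
      moreover have "f \<in> LL \<phi> r"
        unfolding LL_def
      proof (intro CollectI allI)
        fix e
        obtain s where s: "s = 1 \<or> s = -1" "cis (- aang \<phi> r e / 2) = of_real s * cnj (Dh e)"
          using cis_half_a by blast
        have "f e = of_real (sin (\<theta> e / 2) * Re (Dh e * F e)) / Dh e" unfolding f SS_formula ..
        also have "\<dots> = cis (- aang \<phi> r e / 2) * of_real (s * (sin (\<theta> e / 2) * Re (Dh e * F e)))"
          unfolding s(2) Dh_cnj using s(1) by auto
        finally show "\<exists>t. f e = cis (- aang \<phi> r e / 2) * of_real t" by blast
      qed
      ultimately show "f \<in> LL \<phi> r \<inter> {f. KW J R \<phi> r \<theta> f = (\<lambda>_. 0)}" by (auto simp: fun_eq_iff)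
    qed
    show "LL \<phi> r \<inter> {f. KW J R \<phi> r \<theta> f = (\<lambda>_. 0)} \<subseteq> SS \<phi> r \<theta> ` sO J R \<phi> r \<theta>"
    proof
      fix f assume "f \<in> LL \<phi> r \<inter> {f. KW J R \<phi> r \<theta> f = (\<lambda>_. 0)}"
      then have fL: "f \<in> LL \<phi> r" and fK: "KW J R \<phi> r \<theta> f = (\<lambda>_. 0)" by auto
      define u where "u e = Re (f e * Dh e)" for e
      have fu: "f = (\<lambda>e. of_real (u e) / Dh e)" unfolding u_def by (rule ext) (rule LL_form[OF fL])
      have "\<exists>k. \<forall>e. k e - rho e * k (R e) = u e"
        by (rule shift_surj[of rho R u, OF Phi_inj0])
      then obtain k where k: "\<forall>e. k e - rho e * k (R e) = u e" by blast
      have Mk: "(\<lambda>d. of_real (k d - rho d * k (R d)) / Dh d) = f" unfolding fu using k by simp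
      have "\<forall>e. of_real (Kast J R \<theta> om1 om2 om3 k e) / Dh e
          - \<i> * of_real (xw \<theta> e) * (of_real (Kast J R \<theta> om1 om2 om3 k (J e)) / Dh (J e)) = 0"
      proof
        fix e
        have "KW J R \<phi> r \<theta> f e = of_real (Kast J R \<theta> om1 om2 om3 k e) / Dh e
          - \<i> * of_real (xw \<theta> e) * (of_real (Kast J R \<theta> om1 om2 om3 k (J e)) / Dh (J e))"
          using KW_M_Kast[of k e] unfolding Mk .
        moreover have "KW J R \<phi> r \<theta> f e = 0" using fK by simp
        ultimately show "of_real (Kast J R \<theta> om1 om2 om3 k e) / Dh e
          - \<i> * of_real (xw \<theta> e) * (of_real (Kast J R \<theta> om1 om2 om3 k (J e)) / Dh (J e)) = 0" by simp
      qed
      then have Kk: "Kast J R \<theta> om1 om2 om3 k e = 0" for e by (rule N_inj)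
      define g where "g d = 2 * k d" for d
      have Kg: "Kast J R \<theta> om1 om2 om3 g = (\<lambda>_. 0)"
        unfolding g_def using Kast_half[of 2 k] Kk by (simp add: fun_eq_iff)
      have F: "Finv g \<in> sO J R \<phi> r \<theta>" unfolding sO_iff[of "Finv g"] Tt_Finv using Finv_CD Kg by simp
      have "SS \<phi> r \<theta> (Finv g) = (\<lambda>d. of_real (k d - rho d * k (R d)) / Dh d)"
      proof
        fix d
        show "SS \<phi> r \<theta> (Finv g) d = of_real (k d - rho d * k (R d)) / Dh d"
          unfolding SS_sO[OF F] Tt_Finv g_def by simp
      qed
      then have "SS \<phi> r \<theta> (Finv g) = f" unfolding Mk .
      then show "f \<in> SS \<phi> r \<theta> ` sO J R \<phi> r \<theta>" using F by blast
    qed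
  qed
qed

lemma partiii:
  assumes pos: "\<forall>e. 0 < \<theta> e \<and> \<theta> e < pi / 2"
  shows "bij_betw (Tp Dh \<phi> r \<theta>) (sO J R \<phi> r \<theta>)
              ({g. dbar J R \<theta> om1 om2 om3 g = (\<lambda>_. 0)} \<inter> Tp Dh \<phi> r \<theta> ` CD J)"
  unfolding bij_betw_def
proof
  have Tp: "Tp Dh \<phi> r \<theta> F = (\<lambda>d. cis (\<theta> d / 2) * of_real (Tt Dh \<theta> F d))" for F
    using Tp_formula by auto
  have s2: "sin (2 * \<theta> e) \<noteq> 0" for e
  proof -
    have "0 < 2 * \<theta> e" "2 * \<theta> e < pi" using pos[rule_format, of e] by auto
    then have "0 < sin (2 * \<theta> e)" by (rule sin_gt_zero)
    then show ?thesis by simp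
  qed
  have dT: "dbar J R \<theta> om1 om2 om3 (Tp Dh \<phi> r \<theta> F) = (\<lambda>_. 0) \<longleftrightarrow> Kast J R \<theta> om1 om2 om3 (Tt Dh \<theta> F) = (\<lambda>_. 0)" for F
    unfolding Tp dbar_formula using s2 by (auto simp: fun_eq_iff)
  have TpTt: "Tp Dh \<phi> r \<theta> F = Tp Dh \<phi> r \<theta> F' \<Longrightarrow> Tt Dh \<theta> F = Tt Dh \<theta> F'" for F F'
    unfolding Tp by (auto simp: fun_eq_iff)
  show "inj_on (Tp Dh \<phi> r \<theta>) (sO J R \<phi> r \<theta>)"
  proof (rule inj_onI)
    fix F F' assume "F \<in> sO J R \<phi> r \<theta>" "F' \<in> sO J R \<phi> r \<theta>" "Tp Dh \<phi> r \<theta> F = Tp Dh \<phi> r \<theta> F'"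
    moreover have "F \<in> CD J" "F' \<in> CD J" using calculation sO_iff by auto
    ultimately show "F = F'" using TpTt Finv_Tt[of F] Finv_Tt[of F'] by metis
  qed
  show "Tp Dh \<phi> r \<theta> ` sO J R \<phi> r \<theta> = {g. dbar J R \<theta> om1 om2 om3 g = (\<lambda>_. 0)} \<inter> Tp Dh \<phi> r \<theta> ` CD J"
  proof
    show "Tp Dh \<phi> r \<theta> ` sO J R \<phi> r \<theta> \<subseteq> {g. dbar J R \<theta> om1 om2 om3 g = (\<lambda>_. 0)} \<inter> Tp Dh \<phi> r \<theta> ` CD J"
      using sO_iff dT by auto
    show "{g. dbar J R \<theta> om1 om2 om3 g = (\<lambda>_. 0)} \<inter> Tp Dh \<phi> r \<theta> ` CD J \<subseteq> Tp Dh \<phi> r \<theta> ` sO J R \<phi> r \<theta>"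
    proof
      fix h assume "h \<in> {g. dbar J R \<theta> om1 om2 om3 g = (\<lambda>_. 0)} \<inter> Tp Dh \<phi> r \<theta> ` CD J"
      then obtain F where F: "F \<in> CD J" "h = Tp Dh \<phi> r \<theta> F" and d: "dbar J R \<theta> om1 om2 om3 h = (\<lambda>_. 0)" by auto
      then have "F \<in> sO J R \<phi> r \<theta>" using sO_iff dT by auto
      then show "h \<in> Tp Dh \<phi> r \<theta> ` sO J R \<phi> r \<theta>" using F by auto
    qed
  qed
qed

end

theorem corollary4p4:
  fixes J R :: "'d::finite \<Rightarrow> 'd"
    and \<phi> r \<theta> om1 om2 om3 :: "'d \<Rightarrow> real"
    and Dh :: "'d \<Rightarrow> complex"
  assumes map: "combinatorial_map J R"
    and geo: "geometric_data J R \<phi> r \<theta>"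
    and kast: "kasteleyn J R om1 om2 om3"
    and sqrtD: "\<forall>e. (Dh e)\<^sup>2 = cis (aang \<phi> r e)"
    and ident: "\<forall>g e.
        KW J R \<phi> r \<theta>
          (\<lambda>d. of_real (g d) / Dh d - qq J R \<phi> r d * (of_real (g (R d)) / Dh (R d))) e
        = of_real (Kast J R \<theta> om1 om2 om3 g e) / Dh e
          - \<i> * of_real (xw \<theta> e) * (of_real (Kast J R \<theta> om1 om2 om3 g (J e)) / Dh (J e))"
  shows "bij_betw (SS \<phi> r \<theta>) (sO J R \<phi> r \<theta>) (LL \<phi> r \<inter> {f. KW J R \<phi> r \<theta> f = (\<lambda>_. 0)})
       \<and> bij_betw (Tt Dh \<theta>) (sO J R \<phi> r \<theta>) {g. Kast J R \<theta> om1 om2 om3 g = (\<lambda>_. 0)}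
       \<and> (isoradial J R \<phi> \<theta> \<longrightarrow>
            bij_betw (Tp Dh \<phi> r \<theta>) (sO J R \<phi> r \<theta>)
              ({g. dbar J R \<theta> om1 om2 om3 g = (\<lambda>_. 0)} \<inter> Tp Dh \<phi> r \<theta> ` CD J))"
proof -
  interpret cw J R \<phi> r \<theta> om1 om2 om3 Dh
  proof
    show "\<forall>e. J (J e) = e" using map unfolding combinatorial_map_def by auto
    show "inj R" using map unfolding combinatorial_map_def by (auto simp: bij_is_inj)
    show "\<forall>e. (\<Sum>d\<in>orb R e. ccw_angle \<phi> R d) = 2*pi" using geo unfolding geometric_data_def by auto
    show "\<forall>e. \<theta> (J e) = \<theta> e \<and> 0 \<le> \<theta> e \<and> \<theta> e \<le> pi/2" using geo unfolding geometric_data_def by auto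
    show "\<forall>e. \<exists>k::int. aang \<phi> r (J e) = aang \<phi> r e + pi + 2*pi*k" using geo unfolding geometric_data_def by auto
    show "\<forall>e. (Dh e)\<^sup>2 = cis (aang \<phi> r e)" by (rule sqrtD)
    show "\<forall>g e.
        KW J R \<phi> r \<theta>
          (\<lambda>d. of_real (g d) / Dh d - qq J R \<phi> r d * (of_real (g (R d)) / Dh (R d))) e
        = of_real (Kast J R \<theta> om1 om2 om3 g e) / Dh e
          - \<i> * of_real (xw \<theta> e) * (of_real (Kast J R \<theta> om1 om2 om3 g (J e)) / Dh (J e))" by (rule ident)
  qed
  show ?thesis
  proof (intro conjI impI)
    show "bij_betw (SS \<phi> r \<theta>) (sO J R \<phi> r \<theta>) (LL \<phi> r \<inter> {f. KW J R \<phi> r \<theta> f = (\<lambda>_. 0)})" by (rule parti)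
    show "bij_betw (Tt Dh \<theta>) (sO J R \<phi> r \<theta>) {g. Kast J R \<theta> om1 om2 om3 g = (\<lambda>_. 0)}" by (rule partii)
    assume "isoradial J R \<phi> \<theta>"
    then have "\<forall>e. 0 < \<theta> e \<and> \<theta> e < pi / 2" unfolding isoradial_def by auto
    then show "bij_betw (Tp Dh \<phi> r \<theta>) (sO J R \<phi> r \<theta>)
              ({g. dbar J R \<theta> om1 om2 om3 g = (\<lambda>_. 0)} \<inter> Tp Dh \<phi> r \<theta> ` CD J)" by (rule partiii)
  qed
qed

end
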